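(* Let $G+H$ and $G'+H'$ be mixed graphs built from supply graphs $G,G'$ and demand digraphs $H,H'$, such that $G'+H'$ is a minor of $G+H$. Suppose there exist, for $(G',H')$, a measurable partition of the population by OD-pairs, an assignment of cost functions, and two strict equilibria inducing different flows on some arc. Then $(G,H)$ does not have the uniqueness property.
   Context: A supply graph is a finite undirected graph $G=(V,E)$ (parallel edges allowed), with directed version replacing each edge by two opposite arcs; a demand digraph is a simple digraph $H=(T,L)$ with $T\subseteq V$, arcs being OD-pairs; $G+H$ denotes the mixed graph $(V,E,L)$. A minor of a mixed graph is obtained by taking a sub-mixed-graph (subsets of vertices, edges and arcs) and contracting some of its edges (deleting an edge and identifying its endpoints). Routes for $(o,d)\in L$ are directed $(o,d)$-paths in the directed version of $G$. Users form a bounded interval with Lebesgue measure, partitioned measurably by OD-pair; a strategy profile assigns measurably to each user a route of his OD-pair; flows are measures of users using each arc; each user has nonnegative continuous strictly increasing arc cost functions (measurable in the user); an equilibrium is a profile where every user takes a minimal-cost route; it is strict if every user has a unique minimal-cost route. $(G,H)$ has the uniqueness property if for every measurable partition of users into OD-pairs and every such cost assignment, the flow on each arc is the same in all equilibria. *)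

theory Defs
  imports "HOL-Analysis.Analysis"
begin

text \<open>A mixed graph G+H is represented as (V, E, ends, L):
  V vertex set, E edge identifiers of the supply graph (parallel edges allowed),
  ends e = the two endpoints of edge e (orientation irrelevant),
  L the arcs (OD-pairs) of the demand digraph.\<close>

type_synonym ('v,'e) mixed_graph = "'v set \<times> 'e set \<times> ('e \<Rightarrow> 'v \<times> 'v) \<times> ('v \<times> 'v) set"

definition well_formed_mg :: "('v,'e) mixed_graph \<Rightarrow> bool" where
  "well_formed_mg M = (case M of (V, E, ends, L) \<Rightarrow>
     finite V \<and> finite E \<and> (\<forall>e\<in>E. fst (ends e) \<in> V \<and> snd (ends e) \<in> V)
     \<and> L \<subseteq> V \<times> V \<and> (\<forall>(s,t)\<in>L. s \<noteq> t))"

definition cedges :: "('e \<Rightarrow> 'v \<times> 'v) \<Rightarrow> 'e set \<Rightarrow> ('v \<times> 'v) set" where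
  "cedges ends C = {(u,w). \<exists>e\<in>C. ends e = (u,w) \<or> ends e = (w,u)}"

text \<open>M' is a minor of M: take a sub-mixed-graph (V0,E0,L0), contract the edges C \<subseteq> E0
  (vertices of the result = C-connected classes of V0, mapped by phi), and the result is
  isomorphic to M'.\<close>
definition is_minor :: "('w,'f) mixed_graph \<Rightarrow> ('v,'e) mixed_graph \<Rightarrow> bool" where
  "is_minor M' M = (case M' of (V', E', ends', L') \<Rightarrow> case M of (V, E, ends, L) \<Rightarrow>
     (\<exists>V0 E0 L0 C (\<phi>::'v \<Rightarrow> 'w) (\<beta>::'e \<Rightarrow> 'f).
        V0 \<subseteq> V \<and> E0 \<subseteq> E \<and> (\<forall>e\<in>E0. fst (ends e) \<in> V0 \<and> snd (ends e) \<in> V0)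
        \<and> L0 \<subseteq> L \<inter> (V0 \<times> V0) \<and> C \<subseteq> E0
        \<and> \<phi> ` V0 = V'
        \<and> (\<forall>u\<in>V0. \<forall>w\<in>V0. \<phi> u = \<phi> w \<longleftrightarrow> (u,w) \<in> (cedges ends C)\<^sup>*)
        \<and> bij_betw \<beta> (E0 - C) E'
        \<and> (\<forall>e\<in>E0 - C. ends' (\<beta> e) = (\<phi> (fst (ends e)), \<phi> (snd (ends e)))
                      \<or> ends' (\<beta> e) = (\<phi> (snd (ends e)), \<phi> (fst (ends e))))
        \<and> inj_on (map_prod \<phi> \<phi>) L0 \<and> map_prod \<phi> \<phi> ` L0 = L'))"

text \<open>Directed version: an arc is (e, True) traversing ends e forwards, or (e, False) backwards.\<close>
definition darcs :: "'e set \<Rightarrow> ('e \<times> bool) set" where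
  "darcs E = E \<times> UNIV"

definition dtail :: "('e \<Rightarrow> 'v \<times> 'v) \<Rightarrow> 'e \<times> bool \<Rightarrow> 'v" where
  "dtail ends a = (if snd a then fst (ends (fst a)) else snd (ends (fst a)))"

definition dhead :: "('e \<Rightarrow> 'v \<times> 'v) \<Rightarrow> 'e \<times> bool \<Rightarrow> 'v" where
  "dhead ends a = (if snd a then snd (ends (fst a)) else fst (ends (fst a)))"

definition is_route :: "('v,'e) mixed_graph \<Rightarrow> 'v \<times> 'v \<Rightarrow> ('e \<times> bool) list \<Rightarrow> bool" where
  "is_route M od P = (case M of (V, E, ends, L) \<Rightarrow>
     P \<noteq> [] \<and> set P \<subseteq> darcs E
     \<and> dtail ends (hd P) = fst od \<and> dhead ends (last P) = snd od
     \<and> (\<forall>i. Suc i < length P \<longrightarrow> dhead ends (P ! i) = dtail ends (P ! Suc i))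
     \<and> distinct (dtail ends (hd P) # map (dhead ends) P))"

text \<open>Users form the bounded interval I = {a..b} with Lebesgue measure.
  odp assigns each user his OD-pair (a measurable partition of I indexed by L);
  c x arc t is the cost of user x on an arc carrying flow t.\<close>
definition admissible ::
  "('v,'e) mixed_graph \<Rightarrow> real set \<Rightarrow> (real \<Rightarrow> 'v \<times> 'v) \<Rightarrow> (real \<Rightarrow> 'e \<times> bool \<Rightarrow> real \<Rightarrow> real) \<Rightarrow> bool" where
  "admissible M I odp c = (case M of (V, E, ends, L) \<Rightarrow>
     (\<forall>x\<in>I. odp x \<in> L) \<and> (\<forall>l\<in>L. {x\<in>I. odp x = l} \<in> sets lebesgue)
     \<and> (\<forall>x\<in>I. \<forall>a\<in>darcs E. continuous_on {0..} (c x a) \<and> strict_mono_on {0..} (c x a)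
                          \<and> (\<forall>t\<ge>0. c x a t \<ge> 0))
     \<and> (\<forall>a\<in>darcs E. \<forall>t\<ge>0. (\<lambda>x. c x a t) \<in> borel_measurable (restrict_space lebesgue I)))"

definition profile ::
  "('v,'e) mixed_graph \<Rightarrow> real set \<Rightarrow> (real \<Rightarrow> 'v \<times> 'v) \<Rightarrow> (real \<Rightarrow> ('e \<times> bool) list) \<Rightarrow> bool" where
  "profile M I odp \<sigma> = ((\<forall>x\<in>I. is_route M (odp x) (\<sigma> x))
      \<and> (\<forall>P. {x\<in>I. \<sigma> x = P} \<in> sets lebesgue))"

definition flow :: "real set \<Rightarrow> (real \<Rightarrow> ('e \<times> bool) list) \<Rightarrow> 'e \<times> bool \<Rightarrow> real" where
  "flow I \<sigma> a = measure lebesgue {x\<in>I. a \<in> set (\<sigma> x)}"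

definition route_cost ::
  "(real \<Rightarrow> 'e \<times> bool \<Rightarrow> real \<Rightarrow> real) \<Rightarrow> real \<Rightarrow> ('e \<times> bool \<Rightarrow> real) \<Rightarrow> ('e \<times> bool) list \<Rightarrow> real" where
  "route_cost c x f P = sum_list (map (\<lambda>a. c x a (f a)) P)"

definition equilibrium ::
  "('v,'e) mixed_graph \<Rightarrow> real set \<Rightarrow> (real \<Rightarrow> 'v \<times> 'v) \<Rightarrow> (real \<Rightarrow> 'e \<times> bool \<Rightarrow> real \<Rightarrow> real)
   \<Rightarrow> (real \<Rightarrow> ('e \<times> bool) list) \<Rightarrow> bool" where
  "equilibrium M I odp c \<sigma> = (profile M I odp \<sigma> \<and>
     (\<forall>x\<in>I. \<forall>P. is_route M (odp x) P \<longrightarrow>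
        route_cost c x (flow I \<sigma>) (\<sigma> x) \<le> route_cost c x (flow I \<sigma>) P))"

definition strict_equilibrium ::
  "('v,'e) mixed_graph \<Rightarrow> real set \<Rightarrow> (real \<Rightarrow> 'v \<times> 'v) \<Rightarrow> (real \<Rightarrow> 'e \<times> bool \<Rightarrow> real \<Rightarrow> real)
   \<Rightarrow> (real \<Rightarrow> ('e \<times> bool) list) \<Rightarrow> bool" where
  "strict_equilibrium M I odp c \<sigma> = (profile M I odp \<sigma> \<and>
     (\<forall>x\<in>I. \<forall>P. is_route M (odp x) P \<longrightarrow> P \<noteq> \<sigma> x \<longrightarrow>
        route_cost c x (flow I \<sigma>) (\<sigma> x) < route_cost c x (flow I \<sigma>) P))"

definition uniqueness_property :: "('v,'e) mixed_graph \<Rightarrow> real set \<Rightarrow> bool" where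
  "uniqueness_property M I = (case M of (V, E, ends, L) \<Rightarrow>
     (\<forall>odp c \<sigma>1 \<sigma>2. admissible M I odp c \<and> equilibrium M I odp c \<sigma>1 \<and> equilibrium M I odp c \<sigma>2
        \<longrightarrow> (\<forall>a\<in>darcs E. flow I \<sigma>1 a = flow I \<sigma>2 a)))"

end

theory Submission
  imports Defs "HOL-Library.Sublist" "HOL-Library.Nat_Bijection"
begin



fun wk :: "('e \<Rightarrow> 'v\<times>'v) \<Rightarrow> 'v \<Rightarrow> ('e\<times>bool) list \<Rightarrow> 'v \<Rightarrow> bool" where
  "wk en u [] v = (u = v)"
| "wk en u (a#Q) v = (dtail en a = u \<and> wk en (dhead en a) Q v)"

lemma wk_append: "wk en u xs m \<Longrightarrow> wk en m ys v \<Longrightarrow> wk en u (xs@ys) v"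
  by (induct xs arbitrary: u) auto

lemma wk_appendD: "wk en u (xs@ys) v \<Longrightarrow> \<exists>m. wk en u xs m \<and> wk en m ys v"
  by (induct xs arbitrary: u) auto

lemma wk_take_drop: "wk en u Q v \<Longrightarrow> i < length Q \<Longrightarrow> wk en (dhead en (Q!i)) (drop (Suc i) Q) v"
proof (induct Q arbitrary: u i)
  case (Cons a Q) then show ?case by (cases i) auto
qed auto

lemma chain_Cons:
  "(\<forall>i. Suc i < length (a#P) \<longrightarrow> dhead en ((a#P)!i) = dtail en ((a#P)!Suc i)) \<longleftrightarrow>
   ((P \<noteq> [] \<longrightarrow> dhead en a = dtail en (hd P)) \<and> (\<forall>i. Suc i < length P \<longrightarrow> dhead en (P!i) = dtail en (P!Suc i)))"
  apply (cases P)
   apply simp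
  apply (rule iffI)
   apply (intro conjI allI impI)
    apply (drule spec[of _ 0]) apply simp
   apply (drule_tac x="Suc i" in spec) apply simp
  apply clarsimp
  apply (case_tac i) apply simp apply simp
  done

lemma wk_iff: "P \<noteq> [] \<Longrightarrow> (dtail en (hd P) = u \<and> dhead en (last P) = v \<and>
   (\<forall>i. Suc i < length P \<longrightarrow> dhead en (P!i) = dtail en (P!Suc i))) \<longleftrightarrow> wk en u P v"
proof (induct P arbitrary: u)
  case Nil then show ?case by simp
next
  case (Cons a P)
  show ?case
  proof (cases "P = []")
    case True then show ?thesis by auto
  next
    case False
    have "wk en u (a#P) v \<longleftrightarrow> dtail en a = u \<and> wk en (dhead en a) P v" by simp
    also have "\<dots> \<longleftrightarrow> dtail en a = u \<and> (dtail en (hd P) = dhead en a \<and> dhead en (last P) = v \<and>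
   (\<forall>i. Suc i < length P \<longrightarrow> dhead en (P!i) = dtail en (P!Suc i)))" using Cons(1)[OF False] by blast
    finally show ?thesis using False unfolding chain_Cons by auto
  qed
qed

lemma is_route_iff: "is_route (V,E,en,L) od P \<longleftrightarrow> P \<noteq> [] \<and> set P \<subseteq> darcs E \<and> wk en (fst od) P (snd od)
   \<and> distinct (fst od # map (dhead en) P)"
proof -
  { assume "P \<noteq> []"
    then have "(dtail en (hd P) = fst od \<and> dhead en (last P) = snd od \<and>
   (\<forall>i. Suc i < length P \<longrightarrow> dhead en (P!i) = dtail en (P!Suc i))) \<longleftrightarrow> wk en (fst od) P (snd od)"
      by (rule wk_iff) }
  moreover have "P \<noteq> [] \<Longrightarrow> wk en (fst od) P (snd od) \<Longrightarrow> dtail en (hd P) = fst od"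
    by (cases P) auto
  ultimately show ?thesis unfolding is_route_def by (auto simp del: distinct.simps list.map)
qed

lemma shortcut: "wk en u Q v \<Longrightarrow> \<exists>Q'. subseq Q' Q \<and> wk en u Q' v \<and> distinct (u # map (dhead en) Q')"
proof (induct Q arbitrary: u)
  case Nil then show ?case by auto
next
  case (Cons a R)
  then have ta: "dtail en a = u" and wR: "wk en (dhead en a) R v" by auto
  from Cons(1)[OF wR] obtain R' where R': "subseq R' R" "wk en (dhead en a) R' v"
    "distinct (dhead en a # map (dhead en) R')" by blast
  show ?case
  proof (cases "u \<in> set (dhead en a # map (dhead en) R')")
    case False
    then show ?thesis using R' ta by (intro exI[of _ "a#R'"]) auto
  next
    case True
    show ?thesis
    proof (cases "u = dhead en a")
      case True
      then show ?thesis using R' by (intro exI[of _ R']) auto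
    next
      case False
      with True obtain i where i: "i < length R'" "u = dhead en (R'!i)"
        by (auto simp: in_set_conv_nth)
      have "wk en u (drop (Suc i) R') v" using wk_take_drop[OF R'(2) i(1)] i by simp
      moreover have "subseq (drop (Suc i) R') (a#R)"
      proof -
        have "subseq (drop (Suc i) R') R'"
          by (metis append_take_drop_id subseq_drop_many subseq_order.refl)
        then have "subseq (drop (Suc i) R') R" using R'(1) by (rule subseq_order.trans)
        then show ?thesis by (rule list_emb_Cons)
      qed
      moreover have "distinct (u # map (dhead en) (drop (Suc i) R'))"
      proof -
        have "distinct (map (dhead en) R')" using R'(3) by simp
        then have d: "distinct (map (dhead en) (drop i R'))" by (simp add: drop_map[symmetric] distinct_drop)
        have "map (dhead en) (drop i R') = u # map (dhead en) (drop (Suc i) R')"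
          using i by (metis Cons_nth_drop_Suc list.simps(9))
        with d show ?thesis by simp
      qed
      ultimately show ?thesis by blast
    qed
  qed
qed

lemma subseq_set: "subseq xs ys \<Longrightarrow> set xs \<subseteq> set ys"
  by (induct rule: list_emb.induct) auto




locale mnr =
  fixes V :: "'v set" and E :: "'e set" and en :: "'e \<Rightarrow> 'v\<times>'v" and L :: "('v\<times>'v) set"
    and V' :: "'w set" and E' :: "'f set" and en' :: "'f \<Rightarrow> 'w\<times>'w" and L' :: "('w\<times>'w) set"
    and V0 E0 L0 C and \<phi> :: "'v \<Rightarrow> 'w" and \<beta> :: "'e \<Rightarrow> 'f"
  assumes wf: "well_formed_mg (V,E,en,L)" and wf': "well_formed_mg (V',E',en',L')"
    and V0: "V0 \<subseteq> V" and E0: "E0 \<subseteq> E" and endsV0: "\<forall>e\<in>E0. fst (en e) \<in> V0 \<and> snd (en e) \<in> V0"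
    and L0: "L0 \<subseteq> L \<inter> (V0 \<times> V0)" and CE0: "C \<subseteq> E0"
    and phiV: "\<phi> ` V0 = V'"
    and phi_iff: "\<forall>u\<in>V0. \<forall>w\<in>V0. \<phi> u = \<phi> w \<longleftrightarrow> (u,w) \<in> (cedges en C)\<^sup>*"
    and bij: "bij_betw \<beta> (E0 - C) E'"
    and ends_beta: "\<forall>e\<in>E0 - C. en' (\<beta> e) = (\<phi> (fst (en e)), \<phi> (snd (en e)))
                      \<or> en' (\<beta> e) = (\<phi> (snd (en e)), \<phi> (fst (en e)))"
    and injL: "inj_on (map_prod \<phi> \<phi>) L0" and imL: "map_prod \<phi> \<phi> ` L0 = L'"
begin

definition am :: "'e\<times>bool \<Rightarrow> 'f\<times>bool" where
  "am a = (\<beta> (fst a), if en' (\<beta> (fst a)) = (\<phi> (fst (en (fst a))), \<phi> (snd (en (fst a)))) then snd a else \<not> snd a)"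

definition pr :: "('e\<times>bool) list \<Rightarrow> ('f\<times>bool) list" where
  "pr Q = map am (filter (\<lambda>a. fst a \<notin> C) Q)"

lemma darcs_mem[simp]: "a \<in> darcs X \<longleftrightarrow> fst a \<in> X"
  by (cases a) (auto simp: darcs_def)

lemma am_tail: "fst a \<in> E0 - C \<Longrightarrow> dtail en' (am a) = \<phi> (dtail en a)"
  using ends_beta[rule_format, of "fst a"]
  by (cases a) (auto simp: am_def dtail_def)

lemma am_head: "fst a \<in> E0 - C \<Longrightarrow> dhead en' (am a) = \<phi> (dhead en a)"
  using ends_beta[rule_format, of "fst a"]
  by (cases a) (auto simp: am_def dhead_def)

lemma am_in: "fst a \<in> E0 - C \<Longrightarrow> fst (am a) \<in> E'"
  using bij by (auto simp: am_def bij_betw_def)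

lemma am_inj: "inj_on am (darcs (E0 - C))"
proof (rule inj_onI)
  fix a b assume a: "a \<in> darcs (E0 - C)" and b: "b \<in> darcs (E0 - C)" and eq: "am a = am b"
  then have "\<beta> (fst a) = \<beta> (fst b)" by (simp add: am_def)
  with a b bij have "fst a = fst b" by (auto simp: bij_betw_def inj_on_def)
  with eq show "a = b" by (cases a, cases b) (auto simp: am_def split: if_splits)
qed

lemma am_surj: "fst a' \<in> E' \<Longrightarrow> \<exists>a. fst a \<in> E0 - C \<and> am a = a'"
proof -
  assume "fst a' \<in> E'"
  with bij obtain e where e: "e \<in> E0 - C" "\<beta> e = fst a'" by (auto simp: bij_betw_def)
  show ?thesis
  proof (cases "en' (\<beta> e) = (\<phi> (fst (en e)), \<phi> (snd (en e)))")
    case True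
    then show ?thesis using e by (intro exI[of _ "(e, snd a')"]) (cases a', auto simp: am_def)
  next
    case False
    then show ?thesis using e by (intro exI[of _ "(e, \<not> snd a')"]) (cases a', auto simp: am_def)
  qed
qed

lemma C_phi: "fst a \<in> C \<Longrightarrow> \<phi> (dtail en a) = \<phi> (dhead en a)"
proof -
  assume a: "fst a \<in> C"
  then have "fst (en (fst a)) \<in> V0" "snd (en (fst a)) \<in> V0" using CE0 endsV0 by auto
  moreover have "(fst (en (fst a)), snd (en (fst a))) \<in> (cedges en C)\<^sup>*"
    using a unfolding cedges_def by (intro r_into_rtrancl) (auto intro: bexI[of _ "fst a"])
  ultimately have "\<phi> (fst (en (fst a))) = \<phi> (snd (en (fst a)))" using phi_iff by blast
  then show ?thesis by (auto simp: dtail_def dhead_def)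
qed

lemma head_V0: "fst a \<in> E0 \<Longrightarrow> dhead en a \<in> V0 \<and> dtail en a \<in> V0"
  using endsV0 by (auto simp: dhead_def dtail_def)

lemma proj_wk: "wk en u Q v \<Longrightarrow> u \<in> V0 \<Longrightarrow> set Q \<subseteq> darcs E0 \<Longrightarrow> wk en' (\<phi> u) (pr Q) (\<phi> v)"
proof (induct Q arbitrary: u)
  case Nil then show ?case by (simp add: pr_def)
next
  case (Cons a Q)
  then have ta: "dtail en a = u" and w: "wk en (dhead en a) Q v" and aE: "fst a \<in> E0" by auto
  have IH: "wk en' (\<phi> (dhead en a)) (pr Q) (\<phi> v)" using Cons head_V0[OF aE] w by auto
  show ?case
  proof (cases "fst a \<in> C")
    case True
    then show ?thesis using IH C_phi[OF True] ta by (simp add: pr_def)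
  next
    case False
    then show ?thesis using IH am_tail[of a] am_head[of a] ta aE by (simp add: pr_def)
  qed
qed

lemma pr_set: "set Q \<subseteq> darcs E0 \<Longrightarrow> set (pr Q) \<subseteq> darcs E'"
  using am_in by (auto simp: pr_def)

lemma pr_mem: "fst a \<in> E0 - C \<Longrightarrow> set Q \<subseteq> darcs E0 \<Longrightarrow> a \<in> set Q \<longleftrightarrow> am a \<in> set (pr Q)"
proof
  assume "fst a \<in> E0 - C" "a \<in> set Q" then show "am a \<in> set (pr Q)" by (auto simp: pr_def)
next
  assume a: "fst a \<in> E0 - C" and Q: "set Q \<subseteq> darcs E0" and "am a \<in> set (pr Q)"
  then obtain b where b: "b \<in> set Q" "fst b \<notin> C" "am b = am a" by (auto simp: pr_def)
  with Q have "b \<in> darcs (E0 - C)" by auto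
  with a b am_inj have "b = a" by (auto simp: inj_on_def)
  with b show "a \<in> set Q" by simp
qed

lemma cwalk: "(u,w) \<in> (cedges en C)\<^sup>* \<Longrightarrow> \<exists>S. wk en u S w \<and> set S \<subseteq> darcs C"
proof (induct rule: rtrancl_induct)
  case base then show ?case by (intro exI[of _ "[]"]) auto
next
  case (step y z)
  then obtain S where S: "wk en u S y" "set S \<subseteq> darcs C" by blast
  from step(2) obtain e where e: "e \<in> C" "en e = (y,z) \<or> en e = (z,y)" by (auto simp: cedges_def)
  obtain a where a: "fst a = e" "dtail en a = y" "dhead en a = z"
    using e(2)
  proof (elim disjE)
    assume "en e = (y,z)" then show ?thesis using that[of "(e,True)"] by (auto simp: dtail_def dhead_def)
  next
    assume "en e = (z,y)" then show ?thesis using that[of "(e,False)"] by (auto simp: dtail_def dhead_def)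
  qed
  have "wk en u (S @ [a]) z" using S a by (intro wk_append[of _ _ _ y]) auto
  then show ?case using S a e by (intro exI[of _ "S @ [a]"]) auto
qed

lemma cwalk_phi: "wk en u S w \<Longrightarrow> set S \<subseteq> darcs C \<Longrightarrow> u \<in> V0 \<Longrightarrow>
   \<forall>z\<in>set (u # map (dhead en) S). \<phi> z = \<phi> u \<and> z \<in> V0"
proof (induct S arbitrary: u)
  case Nil then show ?case by simp
next
  case (Cons a S)
  then have aC: "fst a \<in> C" and ta: "dtail en a = u" and w: "wk en (dhead en a) S w" by auto
  have h: "dhead en a \<in> V0" using head_V0[of a] aC CE0 by auto
  have "\<phi> (dhead en a) = \<phi> u" using C_phi[OF aC] ta by simp
  with Cons(1)[OF w _ h] Cons(3) Cons(4) h show ?case by auto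
qed

lemma pr_C: "set S \<subseteq> darcs C \<Longrightarrow> pr S = []"
  by (auto simp: pr_def filter_empty_conv)

lemma class_path: "u \<in> V0 \<Longrightarrow> w \<in> V0 \<Longrightarrow> \<phi> u = \<phi> w \<Longrightarrow>
  \<exists>S. wk en u S w \<and> set S \<subseteq> darcs C \<and> distinct (u # map (dhead en) S)
     \<and> (\<forall>z\<in>set (u # map (dhead en) S). \<phi> z = \<phi> u)"
proof -
  assume u: "u \<in> V0" and w: "w \<in> V0" and eq: "\<phi> u = \<phi> w"
  then have "(u,w) \<in> (cedges en C)\<^sup>*" using phi_iff by blast
  from cwalk[OF this] obtain S0 where S0: "wk en u S0 w" "set S0 \<subseteq> darcs C" by blast
  from shortcut[OF S0(1)] obtain S where S: "subseq S S0" "wk en u S w" "distinct (u # map (dhead en) S)" by blast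
  have "set S \<subseteq> darcs C" using subseq_set[OF S(1)] S0(2) by blast
  then show ?thesis using S cwalk_phi[OF S(2) _ u] by blast
qed

end



context mnr begin

lemma lift_gen: "d \<in> V0 \<Longrightarrow> u \<in> V0 \<Longrightarrow> wk en' (\<phi> u) R' (\<phi> d) \<Longrightarrow> distinct (\<phi> u # map (dhead en') R')
  \<Longrightarrow> set R' \<subseteq> darcs E' \<Longrightarrow>
  \<exists>Q. wk en u Q d \<and> set Q \<subseteq> darcs E0 \<and> pr Q = R' \<and> distinct (u # map (dhead en) Q)
     \<and> \<phi> ` set (u # map (dhead en) Q) \<subseteq> set (\<phi> u # map (dhead en') R')"
proof (induct R' arbitrary: u)
  case Nil
  then have "\<phi> u = \<phi> d" by simp
  from class_path[OF Nil(2) Nil(1) this] obtain S where S: "wk en u S d" "set S \<subseteq> darcs C"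
    "distinct (u # map (dhead en) S)" "\<forall>z\<in>set (u # map (dhead en) S). \<phi> z = \<phi> u" by blast
  have "set S \<subseteq> darcs E0" using S(2) CE0 by (auto simp: darcs_def)
  then show ?case using S pr_C[OF S(2)] by (intro exI[of _ S]) auto
next
  case (Cons a' R'')
  from Cons(6) have "fst a' \<in> E'" by simp
  from am_surj[OF this] obtain a where a: "fst a \<in> E0 - C" "am a = a'" by blast
  from Cons(4) have ta': "dtail en' a' = \<phi> u" and w'': "wk en' (dhead en' a') R'' (\<phi> d)" by auto
  have tV: "dtail en a \<in> V0" and hV: "dhead en a \<in> V0" using head_V0[of a] a by auto
  have "\<phi> (dtail en a) = \<phi> u" using am_tail[OF a(1)] a(2) ta' by simp
  from class_path[OF Cons(3) tV this[symmetric]] obtain S where S: "wk en u S (dtail en a)" "set S \<subseteq> darcs C"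
    "distinct (u # map (dhead en) S)" "\<forall>z\<in>set (u # map (dhead en) S). \<phi> z = \<phi> u" by blast
  have hh: "\<phi> (dhead en a) = dhead en' a'" using am_head[OF a(1)] a(2) by simp
  have "\<exists>Q. wk en (dhead en a) Q d \<and> set Q \<subseteq> darcs E0 \<and> pr Q = R'' \<and> distinct (dhead en a # map (dhead en) Q)
     \<and> \<phi> ` set (dhead en a # map (dhead en) Q) \<subseteq> set (\<phi> (dhead en a) # map (dhead en') R'')"
    using Cons(1)[OF Cons(2) hV] w'' hh Cons(5) Cons(6) by auto
  then obtain Q'' where Q'': "wk en (dhead en a) Q'' d" "set Q'' \<subseteq> darcs E0" "pr Q'' = R''"
    "distinct (dhead en a # map (dhead en) Q'')"
    "\<phi> ` set (dhead en a # map (dhead en) Q'') \<subseteq> set (\<phi> (dhead en a) # map (dhead en') R'')" by blast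
  define Q where "Q = S @ a # Q''"
  have "wk en u Q d" unfolding Q_def by (rule wk_append[OF S(1)]) (use Q'' in simp)
  moreover have "set Q \<subseteq> darcs E0" using S(2) Q''(2) a CE0 by (auto simp: Q_def darcs_def mem_Times_iff)
  moreover have "pr Q = a' # R''" using pr_C[OF S(2)] a Q''(3) by (simp add: Q_def pr_def)
  moreover have "distinct (u # map (dhead en) Q)"
  proof -
    have eq: "u # map (dhead en) Q = (u # map (dhead en) S) @ (dhead en a # map (dhead en) Q'')"
      by (simp add: Q_def)
    have "set (u # map (dhead en) S) \<inter> set (dhead en a # map (dhead en) Q'') = {}"
    proof (rule ccontr)
      assume "\<not> ?thesis"
      then obtain z where z1: "z \<in> set (u # map (dhead en) S)" and z2: "z \<in> set (dhead en a # map (dhead en) Q'')" by blast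
      from z1 S(4) have "\<phi> z = \<phi> u" by blast
      moreover from z2 Q''(5) hh have "\<phi> z \<in> set (map (dhead en') (a' # R''))" by auto
      ultimately show False using Cons(5) by auto
    qed
    then show ?thesis using S(3) Q''(4) eq by (metis distinct_append)
  qed
  moreover have "\<phi> ` set (u # map (dhead en) Q) \<subseteq> set (\<phi> u # map (dhead en') (a' # R''))"
    using S(4) Q''(5) hh by (auto simp: Q_def)
  ultimately show ?case by blast
qed

lemma L0_V0: "(o',d) \<in> L0 \<Longrightarrow> o' \<in> V0 \<and> d \<in> V0"
  using L0 by auto

lemma L0_neq: "(o',d) \<in> L0 \<Longrightarrow> \<phi> o' \<noteq> \<phi> d"
proof -
  assume "(o',d) \<in> L0"
  then have "(\<phi> o', \<phi> d) \<in> L'" using imL by force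
  then show ?thesis using wf' by (auto simp: well_formed_mg_def)
qed

lemma route_lift: "(o',d) \<in> L0 \<Longrightarrow> is_route (V',E',en',L') (\<phi> o', \<phi> d) R' \<Longrightarrow>
  \<exists>Q. is_route (V,E,en,L) (o',d) Q \<and> set Q \<subseteq> darcs E0 \<and> pr Q = R'"
proof -
  assume od: "(o',d) \<in> L0" and R: "is_route (V',E',en',L') (\<phi> o', \<phi> d) R'"
  from R have R1: "R' \<noteq> []" "set R' \<subseteq> darcs E'" "wk en' (\<phi> o') R' (\<phi> d)" "distinct (\<phi> o' # map (dhead en') R')"
    by (auto simp: is_route_iff)
  from lift_gen[OF L0_V0[OF od, THEN conjunct2] L0_V0[OF od, THEN conjunct1] R1(3,4,2)]
  obtain Q where Q: "wk en o' Q d" "set Q \<subseteq> darcs E0" "pr Q = R'" "distinct (o' # map (dhead en) Q)" by blast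
  have "Q \<noteq> []" using Q(3) R1(1) by (auto simp: pr_def)
  moreover have "set Q \<subseteq> darcs E" using Q(2) E0 by (auto simp: darcs_def)
  ultimately show ?thesis using Q by (intro exI[of _ Q]) (auto simp: is_route_iff)
qed

lemma route_proj: "(o',d) \<in> L0 \<Longrightarrow> is_route (V,E,en,L) (o',d) Q \<Longrightarrow> set Q \<subseteq> darcs E0 \<Longrightarrow>
  \<exists>P'. is_route (V',E',en',L') (\<phi> o', \<phi> d) P' \<and> subseq P' (pr Q)"
proof -
  assume od: "(o',d) \<in> L0" and Q: "is_route (V,E,en,L) (o',d) Q" and QE: "set Q \<subseteq> darcs E0"
  then have w: "wk en' (\<phi> o') (pr Q) (\<phi> d)" using proj_wk L0_V0[OF od] by (auto simp: is_route_iff)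
  from shortcut[OF w] obtain P' where P': "subseq P' (pr Q)" "wk en' (\<phi> o') P' (\<phi> d)" "distinct (\<phi> o' # map (dhead en') P')" by blast
  have "P' \<noteq> []" using P'(2) L0_neq[OF od] by auto
  moreover have "set P' \<subseteq> darcs E'" using subseq_set[OF P'(1)] pr_set[OF QE] by blast
  ultimately show ?thesis using P' by (intro exI[of _ P']) (auto simp: is_route_iff)
qed

end



lemma route_cost_Cons[simp]: "route_cost c x f (a#P) = c x a (f a) + route_cost c x f P"
  by (simp add: route_cost_def)
lemma route_cost_Nil[simp]: "route_cost c x f [] = 0"
  by (simp add: route_cost_def)

lemma sum_list_subseq: "subseq xs ys \<Longrightarrow> (\<forall>a\<in>set ys. (0::real) \<le> g a) \<Longrightarrow>
   sum_list (map g xs) \<le> sum_list (map g ys)"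
proof (induct rule: list_emb.induct)
  case (list_emb_Nil ys) then show ?case by simp (rule sum_list_nonneg, auto)
next
  case (list_emb_Cons xs ys y) then show ?case by simp
next
  case (list_emb_Cons2 x y xs ys) then show ?case by simp
qed

locale inst = mnr V E en L V' E' en' L' V0 E0 L0 C \<phi> \<beta>
  for V :: "'v set" and E :: "'e set" and en L and V' :: "'w set" and E' :: "'f set" and en' L' V0 E0 L0 C \<phi> \<beta> +
  fixes lo hi :: real and odp' :: "real \<Rightarrow> 'w\<times>'w" and c' :: "real \<Rightarrow> 'f\<times>bool \<Rightarrow> real \<Rightarrow> real"
    and s1 s2 :: "real \<Rightarrow> ('f\<times>bool) list"
  assumes adm': "admissible (V',E',en',L') {lo..hi} odp' c'"
    and se1: "strict_equilibrium (V',E',en',L') {lo..hi} odp' c' s1"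
    and se2: "strict_equilibrium (V',E',en',L') {lo..hi} odp' c' s2"
begin

abbreviation "II \<equiv> {lo..hi}"
abbreviation "NN \<equiv> restrict_space lebesgue II"
definition "W = measure lebesgue II"

lemma finE: "finite E" using wf by (simp add: well_formed_mg_def)
lemma finE': "finite E'" using wf' by (simp add: well_formed_mg_def)
lemma finL': "finite L'" using wf' finite_subset[of L' "V'\<times>V'"] by (auto simp: well_formed_mg_def)
lemma finE0: "finite E0" using finE E0 finite_subset by blast
lemma finC: "finite C" using finE0 CE0 finite_subset by blast
lemma fin_darcs: "finite X \<Longrightarrow> finite (darcs X)" by (simp add: darcs_def)

lemma W_nonneg: "0 \<le> W" by (simp add: W_def)

lemma flow_le: "flow II \<sigma> a \<le> W"
proof (cases "{x\<in>II. a \<in> set (\<sigma> x)} \<in> sets lebesgue")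
  case True
  have "II \<in> lmeasurable" using lmeasurable_cbox[of lo hi] by simp
  then show ?thesis unfolding flow_def W_def using True by (intro measure_mono_fmeasurable) auto
next
  case False then show ?thesis by (simp add: flow_def measure_notin_sets W_nonneg)
qed

lemma flow_nonneg: "0 \<le> flow II \<sigma> a" by (simp add: flow_def)

definition "RT' = {P. set P \<subseteq> darcs E' \<and> length P \<le> card (darcs E')}"

lemma finRT': "finite RT'"
  unfolding RT'_def by (rule finite_lists_length_le) (rule fin_darcs[OF finE'])

lemma route_RT': "is_route (V',E',en',L') l P \<Longrightarrow> P \<in> RT'"
proof -
  assume r: "is_route (V',E',en',L') l P"
  then have s: "set P \<subseteq> darcs E'" and d: "distinct P" by (auto simp: is_route_iff distinct_map)
  have "length P = card (set P)" using d by (simp add: distinct_card)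
  also have "\<dots> \<le> card (darcs E')" using s by (intro card_mono fin_darcs finE')
  finally show ?thesis using s by (simp add: RT'_def)
qed

lemma se: "\<sigma> = s1 \<or> \<sigma> = s2 \<Longrightarrow> strict_equilibrium (V',E',en',L') II odp' c' \<sigma>"
  using se1 se2 by auto

lemma c'_meas: "a \<in> darcs E' \<Longrightarrow> 0 \<le> t \<Longrightarrow> (\<lambda>x. c' x a t) \<in> borel_measurable NN"
  using adm' by (auto simp: admissible_def)

lemma rc_meas: "set P \<subseteq> darcs E' \<Longrightarrow> (\<forall>a. 0 \<le> f a) \<Longrightarrow> (\<lambda>x. route_cost c' x f P) \<in> borel_measurable NN"
proof (induct P)
  case Nil then show ?case by simp
next
  case (Cons a P)
  have "0 \<le> f a" using Cons(3) by blast
  then have "(\<lambda>x. c' x a (f a)) \<in> borel_measurable NN" using Cons(2) by (intro c'_meas) auto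
  moreover have "(\<lambda>x. route_cost c' x f P) \<in> borel_measurable NN" using Cons by simp
  ultimately show ?case by simp
qed

definition "fl \<sigma> = flow II \<sigma>"

definition dif :: "real \<Rightarrow> ('f\<times>bool \<Rightarrow> real) \<Rightarrow> ('f\<times>bool) list \<Rightarrow> ('f\<times>bool) list \<Rightarrow> real" where
  "dif x f P Q = (if route_cost c' x f P - route_cost c' x f Q > 0 then route_cost c' x f P - route_cost c' x f Q else 1)"

definition "TT = RT' \<times> RT' \<times> (UNIV :: bool set)"

definition gg :: "('f\<times>bool) list \<times> ('f\<times>bool) list \<times> bool \<Rightarrow> real \<Rightarrow> real" where
  "gg i x = (case i of (P,Q,b) \<Rightarrow> dif x (if b then fl s1 else fl s2) P Q)"

definition "mu x = min 1 (Min ((\<lambda>i. gg i x) ` TT))"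

lemma finTT: "finite TT" using finRT' by (simp add: TT_def)
lemma TT_ne: "TT \<noteq> {}"
proof -
  have "([],[],True) \<in> TT" by (simp add: TT_def RT'_def)
  then show ?thesis by blast
qed

lemma mu_pos: "0 < mu x"
proof -
  have "\<forall>i\<in>TT. 0 < gg i x" by (auto simp: gg_def dif_def)
  then have "0 < Min ((\<lambda>i. gg i x) ` TT)" using finTT TT_ne by simp
  then show ?thesis by (simp add: mu_def)
qed

lemma mu_le1: "mu x \<le> 1" by (simp add: mu_def)

lemma mu_gap: "\<sigma> = s1 \<or> \<sigma> = s2 \<Longrightarrow> P \<in> RT' \<Longrightarrow> Q \<in> RT' \<Longrightarrow>
  route_cost c' x (fl \<sigma>) Q < route_cost c' x (fl \<sigma>) P \<Longrightarrow>
  route_cost c' x (fl \<sigma>) Q + mu x \<le> route_cost c' x (fl \<sigma>) P"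
proof -
  assume s: "\<sigma> = s1 \<or> \<sigma> = s2" and P: "P \<in> RT'" and Q: "Q \<in> RT'"
    and lt: "route_cost c' x (fl \<sigma>) Q < route_cost c' x (fl \<sigma>) P"
  define i where "i = (P, Q, \<sigma> = s1)"
  have iT: "i \<in> TT" using P Q by (simp add: TT_def i_def)
  have "gg i x = route_cost c' x (fl \<sigma>) P - route_cost c' x (fl \<sigma>) Q"
    using s lt by (auto simp: gg_def i_def dif_def)
  moreover have "Min ((\<lambda>i. gg i x) ` TT) \<le> gg i x" using finTT iT by simp
  ultimately show ?thesis by (simp add: mu_def)
qed

lemma mu_meas: "mu \<in> borel_measurable NN"
proof -
  have "\<And>i. i \<in> TT \<Longrightarrow> gg i \<in> borel_measurable NN"
  proof -
    fix i assume "i \<in> TT"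
    then obtain P Q b where i: "i = (P,Q,b)" "P \<in> RT'" "Q \<in> RT'" by (auto simp: TT_def)
    define f where "f = (if b then fl s1 else fl s2)"
    have f0: "\<forall>a. 0 \<le> f a" by (simp add: f_def fl_def flow_nonneg)
    have mP: "(\<lambda>x. route_cost c' x f P) \<in> borel_measurable NN" using i(2) f0 by (intro rc_meas) (auto simp: RT'_def)
    have mQ: "(\<lambda>x. route_cost c' x f Q) \<in> borel_measurable NN" using i(3) f0 by (intro rc_meas) (auto simp: RT'_def)
    have "gg i = (\<lambda>x. dif x f P Q)" by (rule ext) (simp add: gg_def i f_def)
    also have "\<dots> \<in> borel_measurable NN" unfolding dif_def using mP mQ by measurable
    finally show "gg i \<in> borel_measurable NN" .
  qed
  then have "(\<lambda>x. Min ((\<lambda>i. gg i x) ` TT)) \<in> borel_measurable NN"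
    by (intro borel_measurable_Min finTT)
  then show ?thesis unfolding mu_def by measurable
qed

end



context inst begin

definition "theta x = mu x / (4 * (real (card (darcs E')) + 1))"
definition idx :: "'e\<times>bool \<Rightarrow> nat" where "idx = (SOME f. inj_on f (darcs C))"
definition "wt a = (2::real) ^ idx a"
definition "SW = (\<Sum>a\<in>darcs C. wt a)"
definition "zeta = 1 / ((real (card (darcs C)) + 1) * (W + 1))"
definition "eta x = theta x / (2 * (SW + 1))"
definition "cin x a t = (if fst a \<in> C then eta x * (wt a + zeta * t) else c' x (am a) t + theta x)"
definition "KK x = 1 + (\<Sum>a\<in>darcs E0. cin x a W)"
definition "cM x a t = (if fst a \<in> E0 then cin x a t else KK x + t)"

lemma inj_idx: "inj_on idx (darcs C)"
proof -
  from finite_imp_inj_to_nat_seg[OF fin_darcs[OF finC]] obtain f :: "'e\<times>bool \<Rightarrow> nat" where "inj_on f (darcs C)" by blast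
  then show ?thesis unfolding idx_def by (rule someI[where x=f])
qed

lemma theta_pos: "0 < theta x" using mu_pos[of x] by (simp add: theta_def)
lemma wt_pos: "0 < wt a" by (simp add: wt_def)
lemma SW_nonneg: "0 \<le> SW" unfolding SW_def by (intro sum_nonneg) (simp add: wt_def)
lemma zeta_pos: "0 < zeta" using W_nonneg by (simp add: zeta_def)
lemma eta_pos: "0 < eta x" using theta_pos[of x] SW_nonneg by (simp add: eta_def)

lemma x_props: "x \<in> II \<Longrightarrow> \<sigma> = s1 \<or> \<sigma> = s2 \<Longrightarrow> odp' x \<in> L' \<and> is_route (V',E',en',L') (odp' x) (\<sigma> x)"
  using adm' se[of \<sigma>] by (auto simp: admissible_def strict_equilibrium_def profile_def)

lemma c'_props: "x \<in> II \<Longrightarrow> a \<in> darcs E' \<Longrightarrow> continuous_on {0..} (c' x a) \<and> strict_mono_on {0..} (c' x a)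
   \<and> (\<forall>t\<ge>0. c' x a t \<ge> 0)"
  using adm' by (auto simp: admissible_def)

lemma am_darcs: "fst a \<in> E0 - C \<Longrightarrow> am a \<in> darcs E'"
  using am_in by simp

lemma cin_nonneg: "x \<in> II \<Longrightarrow> fst a \<in> E0 \<Longrightarrow> 0 \<le> t \<Longrightarrow> 0 \<le> cin x a t"
proof -
  assume x: "x \<in> II" and a: "fst a \<in> E0" and t: "0 \<le> t"
  show ?thesis
  proof (cases "fst a \<in> C")
    case True then show ?thesis using eta_pos[of x] wt_pos[of a] zeta_pos t by (simp add: cin_def)
  next
    case False
    then have "0 \<le> c' x (am a) t" using c'_props[OF x am_darcs[of a]] a t by auto
    then show ?thesis using False theta_pos[of x] by (simp add: cin_def)
  qed
qed

lemma cin_mono: "x \<in> II \<Longrightarrow> fst a \<in> E0 \<Longrightarrow> 0 \<le> s \<Longrightarrow> s \<le> t \<Longrightarrow> cin x a s \<le> cin x a t"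
proof -
  assume x: "x \<in> II" and a: "fst a \<in> E0" and s: "0 \<le> s" "s \<le> t"
  show ?thesis
  proof (cases "fst a \<in> C")
    case True then show ?thesis using eta_pos[of x] zeta_pos s by (simp add: cin_def mult_left_mono)
  next
    case False
    then have "strict_mono_on {0..} (c' x (am a))" using c'_props[OF x am_darcs[of a]] a by auto
    have "s < t \<or> s = t" using s by linarith
    then have "c' x (am a) s \<le> c' x (am a) t"
    proof
      assume "s < t" then show ?thesis using strict_mono_onD[OF \<open>strict_mono_on {0..} (c' x (am a))\<close>, of s t] s by simp
    qed simp
    then show ?thesis using False by (simp add: cin_def)
  qed
qed

lemma KK_ge1: "x \<in> II \<Longrightarrow> 1 \<le> KK x"
proof -
  assume x: "x \<in> II"
  have "0 \<le> (\<Sum>a\<in>darcs E0. cin x a W)"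
  proof (rule sum_nonneg)
    fix a assume "a \<in> darcs E0" then show "0 \<le> cin x a W" using cin_nonneg[OF x _ W_nonneg] by simp
  qed
  then show ?thesis by (simp add: KK_def)
qed

lemma cM_nonneg: "x \<in> II \<Longrightarrow> 0 \<le> t \<Longrightarrow> 0 \<le> cM x a t"
proof -
  assume x: "x \<in> II" and t: "0 \<le> t"
  show ?thesis
  proof (cases "fst a \<in> E0")
    case True then show ?thesis using cin_nonneg[OF x True t] by (simp add: cM_def)
  next
    case False then show ?thesis using KK_ge1[OF x] t by (simp add: cM_def)
  qed
qed

lemma theta_meas: "theta \<in> borel_measurable NN"
  unfolding theta_def using mu_meas by measurable
lemma eta_meas: "eta \<in> borel_measurable NN"
  unfolding eta_def using theta_meas by measurable

lemma cin_meas: "fst a \<in> E0 \<Longrightarrow> 0 \<le> t \<Longrightarrow> (\<lambda>x. cin x a t) \<in> borel_measurable NN"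
proof -
  assume a: "fst a \<in> E0" and t: "0 \<le> t"
  show ?thesis
  proof (cases "fst a \<in> C")
    case True then show ?thesis unfolding cin_def using eta_meas by simp
  next
    case False
    have "(\<lambda>x. c' x (am a) t) \<in> borel_measurable NN" using c'_meas[OF am_darcs t] a False by auto
    then show ?thesis unfolding cin_def using False theta_meas by simp
  qed
qed

lemma KK_meas: "KK \<in> borel_measurable NN"
proof -
  have "(\<lambda>x. \<Sum>a\<in>darcs E0. cin x a W) \<in> borel_measurable NN"
    using cin_meas W_nonneg by (intro borel_measurable_sum) auto
  then show ?thesis unfolding KK_def[abs_def] by simp
qed

lemma cM_meas: "0 \<le> t \<Longrightarrow> (\<lambda>x. cM x a t) \<in> borel_measurable NN"
  unfolding cM_def using cin_meas KK_meas by (cases "fst a \<in> E0") auto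

lemma cM_cont: "x \<in> II \<Longrightarrow> continuous_on {0..} (cM x a)"
proof -
  assume x: "x \<in> II"
  show ?thesis
  proof (cases "fst a \<in> E0")
    case False then show ?thesis unfolding cM_def by (simp add: continuous_intros)
  next
    case E: True
    show ?thesis
    proof (cases "fst a \<in> C")
      case True then show ?thesis unfolding cM_def cin_def using E by (simp add: continuous_intros)
    next
      case False
      then have "continuous_on {0..} (c' x (am a))" using c'_props[OF x am_darcs[of a]] E by auto
      then show ?thesis unfolding cM_def cin_def using E False by (simp add: continuous_intros)
    qed
  qed
qed

lemma cM_smono: "x \<in> II \<Longrightarrow> strict_mono_on {0..} (cM x a)"
proof -
  assume x: "x \<in> II"
  show ?thesis
  proof (cases "fst a \<in> E0")
    case False then show ?thesis unfolding cM_def by (intro strict_mono_onI) simp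
  next
    case E: True
    show ?thesis
    proof (cases "fst a \<in> C")
      case True then show ?thesis unfolding cM_def cin_def using E eta_pos[of x] zeta_pos
        by (intro strict_mono_onI) simp
    next
      case False
      then have "strict_mono_on {0..} (c' x (am a))" using c'_props[OF x am_darcs[of a]] E by auto
      note sm = this
      show ?thesis unfolding cM_def cin_def
      proof (intro strict_mono_onI)
        fix r s :: real assume "r \<in> {0..}" "s \<in> {0..}" "r < s"
        then have "c' x (am a) r < c' x (am a) s" by (rule strict_mono_onD[OF sm])
        then show "(if fst a \<in> E0 then if fst a \<in> C then eta x * (wt a + zeta * r) else c' x (am a) r + theta x else KK x + r)
          < (if fst a \<in> E0 then if fst a \<in> C then eta x * (wt a + zeta * s) else c' x (am a) s + theta x else KK x + s)"
          using E False by simp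
      qed
    qed
  qed
qed

end



context inst begin

definition "lf l' = inv_into L0 (map_prod \<phi> \<phi>) l'"
definition "odpM x = lf (odp' x)"
definition "Cand l R = {Q. is_route (V,E,en,L) l Q \<and> set Q \<subseteq> darcs E0 \<and> pr Q = R}"
definition wgt :: "('e\<times>bool) list \<Rightarrow> nat" where "wgt Q = (\<Sum>a\<in>set Q \<inter> darcs C. 2 ^ idx a)"
definition "lift l R = (SOME Q. Q \<in> Cand l R \<and> (\<forall>Q'\<in>Cand l R. wgt Q \<le> wgt Q'))"
definition "sM \<sigma> x = lift (odpM x) (\<sigma> x)"

lemma lf_props: "l' \<in> L' \<Longrightarrow> lf l' \<in> L0 \<and> map_prod \<phi> \<phi> (lf l') = l'"
  using imL by (auto simp: lf_def intro: inv_into_into f_inv_into_f)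

lemma lift_props: "l \<in> L0 \<Longrightarrow> is_route (V',E',en',L') (map_prod \<phi> \<phi> l) R \<Longrightarrow>
  lift l R \<in> Cand l R \<and> (\<forall>Q'\<in>Cand l R. wgt (lift l R) \<le> wgt Q')"
proof -
  assume l: "l \<in> L0" and R: "is_route (V',E',en',L') (map_prod \<phi> \<phi> l) R"
  obtain o' d where od: "l = (o',d)" by (cases l)
  from route_lift[of o' d R] l R od obtain Q where "Q \<in> Cand l R" by (auto simp: Cand_def)
  then have "\<exists>Q. Q \<in> Cand l R \<and> (\<forall>Q'. Q' \<in> Cand l R \<longrightarrow> wgt Q \<le> wgt Q')"
    by (rule ex_has_least_nat)
  then have "\<exists>Q. Q \<in> Cand l R \<and> (\<forall>Q'\<in>Cand l R. wgt Q \<le> wgt Q')" by blast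
  then show ?thesis unfolding lift_def by (rule someI_ex)
qed

lemma sM_props: "x \<in> II \<Longrightarrow> \<sigma> = s1 \<or> \<sigma> = s2 \<Longrightarrow>
  odpM x \<in> L0 \<and> map_prod \<phi> \<phi> (odpM x) = odp' x \<and> sM \<sigma> x \<in> Cand (odpM x) (\<sigma> x)
  \<and> (\<forall>Q'\<in>Cand (odpM x) (\<sigma> x). wgt (sM \<sigma> x) \<le> wgt Q')"
proof -
  assume x: "x \<in> II" and s: "\<sigma> = s1 \<or> \<sigma> = s2"
  from x_props[OF x s] have o: "odp' x \<in> L'" and r: "is_route (V',E',en',L') (odp' x) (\<sigma> x)" by auto
  from lf_props[OF o] have l: "odpM x \<in> L0" "map_prod \<phi> \<phi> (odpM x) = odp' x" by (auto simp: odpM_def)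
  with r lift_props[of "odpM x" "\<sigma> x"] show ?thesis by (simp add: sM_def)
qed

lemma flowM: "\<sigma> = s1 \<or> \<sigma> = s2 \<Longrightarrow> fst a \<in> E0 - C \<Longrightarrow> flow II (sM \<sigma>) a = fl \<sigma> (am a)"
proof -
  assume s: "\<sigma> = s1 \<or> \<sigma> = s2" and a: "fst a \<in> E0 - C"
  have "{x\<in>II. a \<in> set (sM \<sigma> x)} = {x\<in>II. am a \<in> set (\<sigma> x)}"
  proof (intro Collect_cong conj_cong refl)
    fix x assume x: "x \<in> II"
    from sM_props[OF x s] have "set (sM \<sigma> x) \<subseteq> darcs E0" "pr (sM \<sigma> x) = \<sigma> x" by (auto simp: Cand_def)
    then show "a \<in> set (sM \<sigma> x) \<longleftrightarrow> am a \<in> set (\<sigma> x)" using pr_mem[OF a] by metis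
  qed
  then show ?thesis by (simp add: flow_def fl_def)
qed

definition "ctr x f Q = sum_list (map (\<lambda>a. eta x * (wt a + zeta * f a)) (filter (\<lambda>a. fst a \<in> C) Q))"

lemma cost_decomp: "(\<And>a. fst a \<in> E0 - C \<Longrightarrow> f a = g (am a)) \<Longrightarrow> set Q \<subseteq> darcs E0 \<Longrightarrow>
  route_cost cM x f Q = route_cost c' x g (pr Q) + theta x * length (pr Q) + ctr x f Q"
proof (induct Q)
  case Nil then show ?case by (simp add: pr_def ctr_def)
next
  case (Cons a Q)
  then have aE: "fst a \<in> E0" and IH: "route_cost cM x f Q = route_cost c' x g (pr Q) + theta x * length (pr Q) + ctr x f Q"
    by auto
  show ?case
  proof (cases "fst a \<in> C")
    case True
    then have ca: "cM x a (f a) = eta x * (wt a + zeta * f a)" using aE by (simp add: cM_def cin_def)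
    show ?thesis using IH True by (simp add: pr_def ctr_def ca)
  next
    case False
    then have "f a = g (am a)" using Cons(2) aE by simp
    then have ca: "cM x a (f a) = c' x (am a) (g (am a)) + theta x" using aE False by (simp add: cM_def cin_def)
    show ?thesis using IH False by (simp add: pr_def ctr_def ca algebra_simps)
  qed
qed

lemma ctr_set: "distinct Q \<Longrightarrow> ctr x f Q = (\<Sum>a\<in>set Q \<inter> darcs C. eta x * (wt a + zeta * f a))"
proof -
  assume d: "distinct Q"
  have "set (filter (\<lambda>a. fst a \<in> C) Q) = set Q \<inter> darcs C" by auto
  then show ?thesis using d unfolding ctr_def by (simp add: sum_list_distinct_conv_sum_set)
qed

lemma wgt_real: "real (wgt Q) = (\<Sum>a\<in>set Q \<inter> darcs C. wt a)"
  by (simp add: wgt_def wt_def)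

lemma wgt_le_SW: "real (wgt Q) \<le> SW"
  unfolding wgt_real SW_def
  by (rule sum_mono2[OF fin_darcs[OF finC]]) (auto simp: wt_def)

lemma ctr_lower: "distinct Q \<Longrightarrow> (\<forall>a. 0 \<le> f a) \<Longrightarrow> eta x * real (wgt Q) \<le> ctr x f Q"
proof -
  assume d: "distinct Q" and f0: "\<forall>a. 0 \<le> f a"
  have f: "\<And>a. 0 \<le> f a" using f0 by blast
  have "eta x * real (wgt Q) = (\<Sum>a\<in>set Q \<inter> darcs C. eta x * wt a)"
    by (simp add: wgt_real sum_distrib_left)
  also have "\<dots> \<le> (\<Sum>a\<in>set Q \<inter> darcs C. eta x * (wt a + zeta * f a))"
    using eta_pos[of x] zeta_pos f by (intro sum_mono) (simp add: mult_left_mono)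
  finally show ?thesis using ctr_set[OF d] by simp
qed

lemma zeta_bound: "zeta * real (card (darcs C)) * W < 1"
proof -
  let ?k = "real (card (darcs C))"
  have "?k * W < (?k + 1) * (W + 1)" using W_nonneg by (simp add: algebra_simps)
  moreover have pos: "0 < (?k + 1) * (W + 1)" using W_nonneg by (simp add: add_pos_nonneg)
  moreover have "zeta * ?k * W = (?k * W) / ((?k + 1) * (W + 1))" by (simp add: zeta_def)
  ultimately show ?thesis by (simp add: divide_less_eq)
qed

lemma ctr_upper: "distinct Q \<Longrightarrow> (\<forall>a. 0 \<le> f a \<and> f a \<le> W) \<Longrightarrow> ctr x f Q < eta x * (real (wgt Q) + 1)"
proof -
  assume d: "distinct Q" and f: "\<forall>a. 0 \<le> f a \<and> f a \<le> W"
  let ?S = "set Q \<inter> darcs C"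
  have cS: "card ?S \<le> card (darcs C)" by (intro card_mono fin_darcs finC) auto
  have "(\<Sum>a\<in>?S. f a) \<le> (\<Sum>a\<in>?S. W)" using f by (intro sum_mono) auto
  also have "\<dots> = real (card ?S) * W" by simp
  also have "\<dots> \<le> real (card (darcs C)) * W" using cS W_nonneg by (intro mult_right_mono) auto
  finally have sf: "(\<Sum>a\<in>?S. f a) \<le> real (card (darcs C)) * W" .
  have "ctr x f Q = eta x * (real (wgt Q) + zeta * (\<Sum>a\<in>?S. f a))"
    unfolding ctr_set[OF d] wgt_real by (simp add: sum.distrib sum_distrib_left distrib_left mult.assoc)
  also have "\<dots> < eta x * (real (wgt Q) + 1)"
  proof -
    have "zeta * (\<Sum>a\<in>?S. f a) \<le> zeta * (real (card (darcs C)) * W)" using sf zeta_pos by (intro mult_left_mono) auto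
    then have "zeta * (\<Sum>a\<in>?S. f a) < 1" using zeta_bound by (simp add: mult.assoc)
    then show ?thesis using eta_pos[of x] by simp
  qed
  finally show ?thesis .
qed

lemma ctr_small: "distinct Q \<Longrightarrow> (\<forall>a. 0 \<le> f a \<and> f a \<le> W) \<Longrightarrow> ctr x f Q < theta x / 2"
proof -
  assume d: "distinct Q" and f: "\<forall>a. 0 \<le> f a \<and> f a \<le> W"
  have "ctr x f Q < eta x * (real (wgt Q) + 1)" by (rule ctr_upper[OF d f])
  also have "\<dots> \<le> eta x * (SW + 1)" using wgt_le_SW[of Q] eta_pos[of x] by (intro mult_left_mono) auto
  also have "\<dots> = theta x / 2" using SW_nonneg by (simp add: eta_def field_simps)
  finally show ?thesis .
qed

lemma wgt_eq: "wgt Q1 = wgt Q2 \<Longrightarrow> set Q1 \<inter> darcs C = set Q2 \<inter> darcs C"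
proof -
  assume eq: "wgt Q1 = wgt Q2"
  have se: "wgt Q = set_encode (idx ` (set Q \<inter> darcs C))" for Q
  proof -
    have "inj_on idx (set Q \<inter> darcs C)" using inj_idx by (rule inj_on_subset) auto
    then show ?thesis unfolding wgt_def set_encode_def by (simp add: sum.reindex)
  qed
  have "idx ` (set Q1 \<inter> darcs C) = idx ` (set Q2 \<inter> darcs C)"
    using eq unfolding se by (subst (asm) set_encode_eq) auto
  then show ?thesis using inj_on_image_eq_iff[OF inj_idx] by blast
qed

lemma ctr_cmp: "distinct Q1 \<Longrightarrow> distinct Q2 \<Longrightarrow> (\<forall>a. 0 \<le> f a \<and> f a \<le> W) \<Longrightarrow> wgt Q1 \<le> wgt Q2 \<Longrightarrow>
  ctr x f Q1 \<le> ctr x f Q2"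
proof -
  assume d1: "distinct Q1" and d2: "distinct Q2" and f: "\<forall>a. 0 \<le> f a \<and> f a \<le> W" and le: "wgt Q1 \<le> wgt Q2"
  show ?thesis
  proof (cases "wgt Q1 = wgt Q2")
    case True
    then show ?thesis using wgt_eq[OF True] ctr_set[OF d1] ctr_set[OF d2] by simp
  next
    case False
    then have "real (wgt Q1) + 1 \<le> real (wgt Q2)" using le by linarith
    then have "ctr x f Q1 < eta x * real (wgt Q2)"
      using ctr_upper[OF d1 f, of x] eta_pos[of x] by (smt (verit) mult_left_mono)
    also have "\<dots> \<le> ctr x f Q2" using ctr_lower[OF d2] f by blast
    finally show ?thesis by simp
  qed
qed

end



context inst begin

lemma rc_nonneg_terms: "x \<in> II \<Longrightarrow> set Q \<subseteq> darcs E' \<Longrightarrow> (\<forall>a. 0 \<le> g a) \<Longrightarrow> \<forall>a\<in>set Q. 0 \<le> c' x a (g a)"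
  using c'_props by blast

lemma eq_opt:
  assumes s: "\<sigma> = s1 \<or> \<sigma> = s2" and x: "x \<in> II" and P: "is_route (V,E,en,L) (odpM x) P"
  shows "route_cost cM x (flow II (sM \<sigma>)) (sM \<sigma> x) \<le> route_cost cM x (flow II (sM \<sigma>)) P"
proof -
  define f where "f = flow II (sM \<sigma>)"
  define g where "g = fl \<sigma>"
  have fb: "\<forall>a. 0 \<le> f a \<and> f a \<le> W" by (simp add: f_def flow_nonneg flow_le)
  have f0: "\<And>a. 0 \<le> f a" and fW: "\<And>a. f a \<le> W" using fb by auto
  have g0: "\<forall>a. 0 \<le> g a" by (simp add: g_def fl_def flow_nonneg)
  have fg: "\<And>a. fst a \<in> E0 - C \<Longrightarrow> f a = g (am a)" using flowM[OF s] by (simp add: f_def g_def)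
  define Lq where "Lq = sM \<sigma> x"
  define R where "R = \<sigma> x"
  from sM_props[OF x s] have l0: "odpM x \<in> L0" and lphi: "map_prod \<phi> \<phi> (odpM x) = odp' x"
    and LC: "Lq \<in> Cand (odpM x) R" and Lmin: "\<forall>Q'\<in>Cand (odpM x) R. wgt Lq \<le> wgt Q'"
    by (auto simp: Lq_def R_def)
  obtain o' d where od: "odpM x = (o',d)" by (cases "odpM x")
  from LC have Lr: "is_route (V,E,en,L) (o',d) Lq" and LE: "set Lq \<subseteq> darcs E0" and LR: "pr Lq = R"
    by (auto simp: Cand_def od)
  have Ld: "distinct Lq" using Lr by (auto simp: is_route_iff distinct_map)
  have Pd: "distinct P" using P by (auto simp: is_route_iff distinct_map)
  have Rr: "is_route (V',E',en',L') (odp' x) R" using x_props[OF x s] by (simp add: R_def)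
  then have RT: "R \<in> RT'" by (rule route_RT')
  have lenR: "real (length R) \<le> real (card (darcs E'))" using RT by (simp add: RT'_def)
  have costL: "route_cost cM x f Lq = route_cost c' x g R + theta x * length R + ctr x f Lq"
    using cost_decomp[of f g, OF fg LE] LR by simp
  have ctrL: "ctr x f Lq < theta x / 2" by (rule ctr_small[OF Ld fb])
  have th: "0 < theta x" by (rule theta_pos)
  have odp: "odp' x = (\<phi> o', \<phi> d)" using lphi od by simp
  show ?thesis unfolding f_def[symmetric] Lq_def[symmetric]
  proof (cases "set P \<subseteq> darcs E0")
    case False
    then obtain a where aP: "a \<in> set P" and aE': "a \<notin> darcs E0" by blast
    then have aE: "fst a \<notin> E0" by simp
    have "route_cost cM x f Lq = (\<Sum>b\<in>set Lq. cM x b (f b))"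
      using Ld by (simp add: route_cost_def sum_list_distinct_conv_sum_set)
    also have "\<dots> = (\<Sum>b\<in>set Lq. cin x b (f b))" using LE by (intro sum.cong) (auto simp: cM_def)
    also have "\<dots> \<le> (\<Sum>b\<in>darcs E0. cin x b (f b))"
      using LE fb cin_nonneg[OF x] by (intro sum_mono2 fin_darcs finE0) auto
    also have "\<dots> \<le> (\<Sum>b\<in>darcs E0. cin x b W)"
      using fb cin_mono[OF x] by (intro sum_mono) auto
    also have "\<dots> < KK x" by (simp add: KK_def)
    also have "\<dots> \<le> cM x a (f a)" using aE f0 by (simp add: cM_def)
    also have "\<dots> \<le> (\<Sum>b\<in>set P. cM x b (f b))"
      using aP fb cM_nonneg[OF x] by (intro member_le_sum) auto
    also have "\<dots> = route_cost cM x f P"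
      using Pd by (simp add: route_cost_def sum_list_distinct_conv_sum_set)
    finally show "route_cost cM x f Lq \<le> route_cost cM x f P" by simp
  next
    case True
    note PE = True
    have costP: "route_cost cM x f P = route_cost c' x g (pr P) + theta x * length (pr P) + ctr x f P"
      using cost_decomp[of f g, OF fg PE] by simp
    have ctrP: "0 \<le> ctr x f P"
      using ctr_lower[OF Pd, of f x] fb eta_pos[of x] by (smt (verit) of_nat_0_le_iff mult_nonneg_nonneg)
    from route_proj[of o' d P] P PE l0 od obtain P' where P'r: "is_route (V',E',en',L') (\<phi> o', \<phi> d) P'"
      and sub: "subseq P' (pr P)" by auto
    have prE: "set (pr P) \<subseteq> darcs E'" by (rule pr_set[OF PE])
    have rcP': "route_cost c' x g P' \<le> route_cost c' x g (pr P)"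
      unfolding route_cost_def by (rule sum_list_subseq[OF sub rc_nonneg_terms[OF x prE g0]])
    show "route_cost cM x f Lq \<le> route_cost cM x f P"
    proof (cases "P' = R")
      case False
      have "route_cost c' x g R < route_cost c' x g P'"
        using se[OF s] x P'r False odp unfolding strict_equilibrium_def g_def fl_def R_def by auto
      then have gap: "route_cost c' x g R + mu x \<le> route_cost c' x g P'"
        using mu_gap[OF s route_RT'[OF P'r] RT] by (simp add: g_def)
      have "theta x * length R \<le> theta x * card (darcs E')" using lenR th by simp
      moreover have "theta x * card (darcs E') + theta x / 2 \<le> mu x"
      proof -
        have "theta x * card (darcs E') + theta x / 2 \<le> theta x * (card (darcs E') + 1)" using th
          by (simp add: algebra_simps)
        also have "\<dots> = mu x / 4" by (simp add: theta_def field_simps)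
        also have "\<dots> \<le> mu x" using mu_pos[of x] by simp
        finally show ?thesis .
      qed
      moreover have "0 \<le> theta x * length (pr P)" using th by simp
      ultimately show ?thesis using costL costP ctrL ctrP gap rcP' by linarith
    next
      case True
      show ?thesis
      proof (cases "pr P = R")
        case False
        have "length P' \<le> length (pr P)" using sub by (rule list_emb_length)
        moreover have "length P' \<noteq> length (pr P)" using subseq_same_length[OF sub] True False by auto
        ultimately have "length R + 1 \<le> length (pr P)" using True by simp
        then have "theta x * (length R + 1) \<le> theta x * length (pr P)" using th
          by (intro mult_left_mono) auto
        then have "theta x * length R + theta x \<le> theta x * length (pr P)" by (simp add: distrib_left)
        then show ?thesis using costL costP ctrL ctrP rcP'[unfolded True] th by linarith
      next
        case prR: True
        have "P \<in> Cand (odpM x) R" using P PE prR by (simp add: Cand_def)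
        then have "wgt Lq \<le> wgt P" using Lmin by blast
        then have "ctr x f Lq \<le> ctr x f P" by (rule ctr_cmp[OF Ld Pd fb])
        then show ?thesis using costL costP prR by simp
      qed
    qed
  qed
qed

end



context inst begin

lemma admM: "admissible (V,E,en,L) II odpM cM"
proof -
  have A: "\<forall>x\<in>II. odpM x \<in> L"
  proof
    fix x assume x: "x \<in> II"
    from sM_props[OF x, of s1] have "odpM x \<in> L0" by simp
    then show "odpM x \<in> L" using L0 by auto
  qed
  have B: "\<forall>l\<in>L. {x\<in>II. odpM x = l} \<in> sets lebesgue"
  proof
    fix l assume "l \<in> L"
    have eq: "{x\<in>II. odpM x = l} = (\<Union>l'\<in>{l'\<in>L'. lf l' = l}. {x\<in>II. odp' x = l'})"
    proof (rule set_eqI, rule iffI)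
      fix x assume "x \<in> {x\<in>II. odpM x = l}"
      then have x: "x \<in> II" and e: "odpM x = l" by auto
      from x_props[OF x, of s1] have "odp' x \<in> L'" by simp
      then show "x \<in> (\<Union>l'\<in>{l'\<in>L'. lf l' = l}. {x\<in>II. odp' x = l'})" using x e by (auto simp: odpM_def)
    qed (auto simp: odpM_def)
    have "\<And>l'. l' \<in> L' \<Longrightarrow> {x\<in>II. odp' x = l'} \<in> sets lebesgue" using adm' by (auto simp: admissible_def)
    then have "(\<Union>l'\<in>{l'\<in>L'. lf l' = l}. {x\<in>II. odp' x = l'}) \<in> sets lebesgue"
      using finL' by (intro sets.finite_UN) auto
    then show "{x\<in>II. odpM x = l} \<in> sets lebesgue" using eq by simp
  qed
  have Cc: "\<forall>x\<in>II. \<forall>a\<in>darcs E. continuous_on {0..} (cM x a) \<and> strict_mono_on {0..} (cM x a)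
                          \<and> (\<forall>t\<ge>0. cM x a t \<ge> 0)"
    using cM_cont cM_smono cM_nonneg by blast
  have D: "\<forall>a\<in>darcs E. \<forall>t\<ge>0. (\<lambda>x. cM x a t) \<in> borel_measurable (restrict_space lebesgue II)"
    using cM_meas by blast
  show ?thesis unfolding admissible_def using A B Cc D by simp
qed

lemma profM: "\<sigma> = s1 \<or> \<sigma> = s2 \<Longrightarrow> profile (V,E,en,L) II odpM (sM \<sigma>)"
proof -
  assume s: "\<sigma> = s1 \<or> \<sigma> = s2"
  have A: "\<forall>x\<in>II. is_route (V,E,en,L) (odpM x) (sM \<sigma> x)"
    using sM_props[OF _ s] by (auto simp: Cand_def)
  have B: "{x\<in>II. sM \<sigma> x = P} \<in> sets lebesgue" for P
  proof -
    define F where "F = {p \<in> L' \<times> RT'. lift (lf (fst p)) (snd p) = P}"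
    have eq: "{x\<in>II. sM \<sigma> x = P} = (\<Union>p\<in>F. {x\<in>II. odp' x = fst p} \<inter> {x\<in>II. \<sigma> x = snd p})"
    proof (rule set_eqI, rule iffI)
      fix x assume "x \<in> {x\<in>II. sM \<sigma> x = P}"
      then have x: "x \<in> II" and e: "sM \<sigma> x = P" by auto
      from x_props[OF x s] have "odp' x \<in> L'" "\<sigma> x \<in> RT'" using route_RT' by blast+
      then have "(odp' x, \<sigma> x) \<in> F" using e by (simp add: F_def sM_def odpM_def)
      then show "x \<in> (\<Union>p\<in>F. {x\<in>II. odp' x = fst p} \<inter> {x\<in>II. \<sigma> x = snd p})" using x by force
    qed (auto simp: F_def sM_def odpM_def)
    have fF: "finite F" using finL' finRT' by (intro finite_subset[of F "L' \<times> RT'"]) (auto simp: F_def)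
    have m1: "\<And>l'. l' \<in> L' \<Longrightarrow> {x\<in>II. odp' x = l'} \<in> sets lebesgue" using adm' by (auto simp: admissible_def)
    have m2: "\<And>R. {x\<in>II. \<sigma> x = R} \<in> sets lebesgue" using se[OF s] by (auto simp: strict_equilibrium_def profile_def)
    have "(\<Union>p\<in>F. {x\<in>II. odp' x = fst p} \<inter> {x\<in>II. \<sigma> x = snd p}) \<in> sets lebesgue"
      using fF m1 m2 by (intro sets.finite_UN sets.Int) (auto simp: F_def)
    then show ?thesis using eq by simp
  qed
  show ?thesis unfolding profile_def using A B by blast
qed

lemma eqM: "\<sigma> = s1 \<or> \<sigma> = s2 \<Longrightarrow> equilibrium (V,E,en,L) II odpM cM (sM \<sigma>)"
  unfolding equilibrium_def using profM eq_opt by blast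

lemma diffM: "a' \<in> darcs E' \<Longrightarrow> flow II s1 a' \<noteq> flow II s2 a' \<Longrightarrow>
  \<exists>a\<in>darcs E. flow II (sM s1) a \<noteq> flow II (sM s2) a"
proof -
  assume a': "a' \<in> darcs E'" and ne: "flow II s1 a' \<noteq> flow II s2 a'"
  from am_surj[of a'] a' obtain a where a: "fst a \<in> E0 - C" "am a = a'" by auto
  have "flow II (sM s1) a = flow II s1 a'" using flowM[of s1 a] a by (simp add: fl_def)
  moreover have "flow II (sM s2) a = flow II s2 a'" using flowM[of s2 a] a by (simp add: fl_def)
  moreover have "a \<in> darcs E" using a E0 by auto
  ultimately show ?thesis using ne by metis
qed

lemma not_unique: "a' \<in> darcs E' \<Longrightarrow> flow II s1 a' \<noteq> flow II s2 a' \<Longrightarrow> \<not> uniqueness_property (V,E,en,L) II"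
proof -
  assume a': "a' \<in> darcs E'" and ne: "flow II s1 a' \<noteq> flow II s2 a'"
  from diffM[OF a' ne] obtain a where a: "a \<in> darcs E" "flow II (sM s1) a \<noteq> flow II (sM s2) a" by blast
  have e1: "equilibrium (V,E,en,L) II odpM cM (sM s1)" by (rule eqM) simp
  have e2: "equilibrium (V,E,en,L) II odpM cM (sM s2)" by (rule eqM) simp
  show ?thesis unfolding uniqueness_property_def prod.case
  proof
    assume "\<forall>odp c \<sigma>1 \<sigma>2. admissible (V, E, en, L) II odp c \<and> equilibrium (V, E, en, L) II odp c \<sigma>1 \<and>
        equilibrium (V, E, en, L) II odp c \<sigma>2 \<longrightarrow> (\<forall>a\<in>darcs E. flow II \<sigma>1 a = flow II \<sigma>2 a)"
    then have "\<forall>a\<in>darcs E. flow II (sM s1) a = flow II (sM s2) a"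
      using admM e1 e2 by blast
    then show False using a by blast
  qed
qed

end

theorem mainTheorem11:
  fixes M :: "('v,'e) mixed_graph" and M' :: "('w,'f) mixed_graph" and lo hi :: real
  assumes "well_formed_mg M" and "well_formed_mg M'"
    and "is_minor M' M"
    and "\<exists>odp c \<sigma>1 \<sigma>2 a. admissible M' {lo..hi} odp c
           \<and> strict_equilibrium M' {lo..hi} odp c \<sigma>1 \<and> strict_equilibrium M' {lo..hi} odp c \<sigma>2
           \<and> a \<in> darcs (fst (snd M')) \<and> flow {lo..hi} \<sigma>1 a \<noteq> flow {lo..hi} \<sigma>2 a"
  shows "\<not> uniqueness_property M {lo..hi}"
proof -
  obtain V E en L where M: "M = (V,E,en,L)" by (cases M) auto
  obtain V' E' en' L' where M': "M' = (V',E',en',L')" by (cases M') auto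
  from assms(3) obtain V0 E0 L0 C and \<phi> :: "'v \<Rightarrow> 'w" and \<beta> :: "'e \<Rightarrow> 'f" where mn:
        "V0 \<subseteq> V" "E0 \<subseteq> E" "\<forall>e\<in>E0. fst (en e) \<in> V0 \<and> snd (en e) \<in> V0"
        "L0 \<subseteq> L \<inter> (V0 \<times> V0)" "C \<subseteq> E0"
        "\<phi> ` V0 = V'"
        "\<forall>u\<in>V0. \<forall>w\<in>V0. \<phi> u = \<phi> w \<longleftrightarrow> (u,w) \<in> (cedges en C)\<^sup>*"
        "bij_betw \<beta> (E0 - C) E'"
        "\<forall>e\<in>E0 - C. en' (\<beta> e) = (\<phi> (fst (en e)), \<phi> (snd (en e)))
                      \<or> en' (\<beta> e) = (\<phi> (snd (en e)), \<phi> (fst (en e)))"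
        "inj_on (map_prod \<phi> \<phi>) L0" "map_prod \<phi> \<phi> ` L0 = L'"
    unfolding is_minor_def M M' by auto
  from assms(4) obtain odp c \<sigma>1 \<sigma>2 a where h: "admissible (V',E',en',L') {lo..hi} odp c"
    "strict_equilibrium (V',E',en',L') {lo..hi} odp c \<sigma>1" "strict_equilibrium (V',E',en',L') {lo..hi} odp c \<sigma>2"
    "a \<in> darcs E'" "flow {lo..hi} \<sigma>1 a \<noteq> flow {lo..hi} \<sigma>2 a"
    unfolding M' by auto
  interpret I: inst V E en L V' E' en' L' V0 E0 L0 C \<phi> \<beta> lo hi odp c \<sigma>1 \<sigma>2
    using assms(1,2) mn h unfolding M M' by unfold_locales auto
  show ?thesis using I.not_unique[OF h(4,5)] unfolding M .
qed



end
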